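(* Let $A$ be a densely defined closed operator in a complex Hilbert space with $\operatorname{D}(A)\subset\operatorname{D}(A^* )$ and $\operatorname{Num}(A)\subset\{z:\operatorname{Im}z\ge0\}$. Assume that for every sequence $a_n>0$ with $a_n\to0$ one has $K(a_n)\to\infty$, where $$K(a)=\inf\Big\{\tfrac{\operatorname{Im}\langle Av,v\rangle}{(\operatorname{Re}\langle Av,v\rangle)^2}: v\in\operatorname{D}(A),\|v\|=1,\ 0<|\langle Av,v\rangle|<a,\ \operatorname{Re}\langle Av,v\rangle>0\Big\}.$$ Let $\alpha\in\mathbb{C}$ with $0<\operatorname{Re}\alpha<1$, $0<\operatorname{Im}\alpha<1$, $|\alpha|<1$, let $(\varepsilon_n)\subset(0,1)$ with $\varepsilon_n\to0$, and let $(u_n)\subset\operatorname{D}(A)$ with $\|u_n\|=1$ and $\langle Au_n,u_n\rangle=\varepsilon_n\alpha$. Let $(v_n)\subset\operatorname{D}(A)$ satisfy $\max(\sup_n\|v_n\|,\sup_n\|Av_n\|,\sup_n\|A^*v_n\|)\le1$ and $\sup_n|\operatorname{Re}\langle Av_n,v_n\rangle|\le\operatorname{Re}(\alpha)/2$. Then $$\operatorname{Re}(\langle Av_n,u_n\rangle+\langle Au_n,v_n\rangle)\to0\quad(n\to\infty).$$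
   Context: $\operatorname{Num}(A)=\{\langle Af,f\rangle: f\in\operatorname{D}(A),\|f\|=1\}$. The infimum of the empty set is $+\infty$. *)

theory Defs
  imports "HOL-Analysis.Analysis" "HOL-Library.Extended_Real"
begin

text \<open>HOL-Analysis has no complex inner product spaces, so a complex Hilbert space is
given explicitly: the additive group is the type 'a (class ab_group_add), complex scalar
multiplication sc and an inner product ip, linear in the first and conjugate-linear in the
second argument.\<close>

definition hnorm :: "('a \<Rightarrow> 'a \<Rightarrow> complex) \<Rightarrow> 'a \<Rightarrow> real" where
  "hnorm ip x = sqrt (Re (ip x x))"

definition hconv :: "('a \<Rightarrow> 'a \<Rightarrow> complex) \<Rightarrow> (nat \<Rightarrow> 'a::ab_group_add) \<Rightarrow> 'a \<Rightarrow> bool" where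
  "hconv ip X x \<longleftrightarrow> (\<forall>e>0. \<exists>N. \<forall>n\<ge>N. hnorm ip (X n - x) < e)"

definition complex_hilbert ::
  "(complex \<Rightarrow> 'a::ab_group_add \<Rightarrow> 'a) \<Rightarrow> ('a \<Rightarrow> 'a \<Rightarrow> complex) \<Rightarrow> bool" where
  "complex_hilbert sc ip \<longleftrightarrow>
     (\<forall>c x y. sc c (x + y) = sc c x + sc c y) \<and>
     (\<forall>c d x. sc (c + d) x = sc c x + sc d x) \<and>
     (\<forall>c d x. sc c (sc d x) = sc (c * d) x) \<and>
     (\<forall>x. sc 1 x = x) \<and>
     (\<forall>x y z. ip (x + y) z = ip x z + ip y z) \<and>
     (\<forall>c x y. ip (sc c x) y = c * ip x y) \<and>
     (\<forall>x y. ip y x = cnj (ip x y)) \<and>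
     (\<forall>x. 0 \<le> Re (ip x x)) \<and>
     (\<forall>x. ip x x = 0 \<longrightarrow> x = 0) \<and>
     (\<forall>X. (\<forall>e>0. \<exists>N. \<forall>m\<ge>N. \<forall>n\<ge>N. hnorm ip (X m - X n) < e)
          \<longrightarrow> (\<exists>x. hconv ip X x))"

text \<open>A (possibly unbounded) linear operator is a domain D together with a map A;
the values of A outside D are irrelevant.\<close>

definition lin_operator ::
  "(complex \<Rightarrow> 'a::ab_group_add \<Rightarrow> 'a) \<Rightarrow> 'a set \<Rightarrow> ('a \<Rightarrow> 'a) \<Rightarrow> bool" where
  "lin_operator sc D A \<longleftrightarrow>
     0 \<in> D \<and> (\<forall>x\<in>D. \<forall>y\<in>D. x + y \<in> D) \<and> (\<forall>c. \<forall>x\<in>D. sc c x \<in> D) \<and>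
     (\<forall>x\<in>D. \<forall>y\<in>D. A (x + y) = A x + A y) \<and> (\<forall>c. \<forall>x\<in>D. A (sc c x) = sc c (A x))"

definition densely_defined :: "('a \<Rightarrow> 'a \<Rightarrow> complex) \<Rightarrow> 'a::ab_group_add set \<Rightarrow> bool" where
  "densely_defined ip D \<longleftrightarrow> (\<forall>x. \<forall>e>0. \<exists>y\<in>D. hnorm ip (x - y) < e)"

definition closed_operator ::
  "('a \<Rightarrow> 'a \<Rightarrow> complex) \<Rightarrow> 'a::ab_group_add set \<Rightarrow> ('a \<Rightarrow> 'a) \<Rightarrow> bool" where
  "closed_operator ip D A \<longleftrightarrow>
     (\<forall>X x y. (\<forall>n. X n \<in> D) \<longrightarrow> hconv ip X x \<longrightarrow> hconv ip (\<lambda>n. A (X n)) y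
        \<longrightarrow> x \<in> D \<and> A x = y)"

definition adj_dom :: "('a \<Rightarrow> 'a \<Rightarrow> complex) \<Rightarrow> 'a set \<Rightarrow> ('a \<Rightarrow> 'a) \<Rightarrow> 'a set" where
  "adj_dom ip D A = {y. \<exists>z. \<forall>x\<in>D. ip (A x) y = ip x z}"

definition adj :: "('a \<Rightarrow> 'a \<Rightarrow> complex) \<Rightarrow> 'a set \<Rightarrow> ('a \<Rightarrow> 'a) \<Rightarrow> 'a \<Rightarrow> 'a" where
  "adj ip D A y = (THE z. \<forall>x\<in>D. ip (A x) y = ip x z)"

definition num_range :: "('a \<Rightarrow> 'a \<Rightarrow> complex) \<Rightarrow> 'a set \<Rightarrow> ('a \<Rightarrow> 'a) \<Rightarrow> complex set" where
  "num_range ip D A = {ip (A f) f | f. f \<in> D \<and> hnorm ip f = 1}"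

text \<open>K(a), as an extended real; the infimum of the empty set is +infinity.\<close>

definition Kfun :: "('a \<Rightarrow> 'a \<Rightarrow> complex) \<Rightarrow> 'a set \<Rightarrow> ('a \<Rightarrow> 'a) \<Rightarrow> real \<Rightarrow> ereal" where
  "Kfun ip D A a = Inf {ereal (Im (ip (A v) v) / (Re (ip (A v) v))\<^sup>2) | v.
      v \<in> D \<and> hnorm ip v = 1 \<and> 0 < cmod (ip (A v) v) \<and> cmod (ip (A v) v) < a
      \<and> Re (ip (A v) v) > 0}"

end

theory Submission
  imports Defs
begin

lemma arith_core:
  fixes e r t s R rho sig Ia Ra IP X Y1 Y2 N c m d :: real
  assumes e: "0 < e" "e < 1" and r: "r = sqrt e" and t: "t = s * r / 4" and s: "\<bar>s\<bar> = 1"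
    and sR: "s * R = \<bar>R\<bar>" and d: "0 < d" "d \<le> \<bar>R\<bar>" and R2: "\<bar>R\<bar> \<le> 2"
    and rho: "\<bar>rho\<bar> \<le> Ra / 2" and Ra: "0 < Ra" "Ra < 1" and Ia: "0 < Ia" "Ia < 1"
    and sig: "sig \<le> 1"
    and Y1: "Y1 = e * Ia + t * IP + t^2 * sig" "0 \<le> Y1"
    and Y2: "Y2 = e * Ia - t * IP + t^2 * sig" "0 \<le> Y2"
    and X: "X = e * Ra + t * R + t^2 * rho"
    and N: "N = 1 + 2 * t * c + t^2 * m" "\<bar>c\<bar> \<le> 1" "0 \<le> m" "m \<le> 1"
  shows "X \<ge> d * r / 4" "N \<ge> 1/2" "N \<le> 2" "N * Y1 / X^2 \<le> 96 / d^2"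
    "(\<bar>X\<bar> + \<bar>Y1\<bar>) / N < 10 * r"
proof -
  have r0: "0 < r" using r e by simp
  have r1: "r < 1" using r e by simp
  have rr: "r^2 = e" using r e by simp
  have "r * r \<le> r * 1" using r0 r1 by (intro mult_left_mono) auto
  then have er: "e \<le> r" using rr by (simp add: power2_eq_square)
  have s2: "s^2 = 1" using s by (metis power2_abs one_power2)
  have "t^2 = s^2 * r^2 / 16" unfolding t by (simp add: power_mult_distrib power_divide)
  then have t2: "t^2 = e / 16" using s2 rr by simp
  have "\<bar>t\<bar> = \<bar>s\<bar> * \<bar>r\<bar> / 4" unfolding t by (simp add: abs_mult)
  then have ta: "\<bar>t\<bar> = r / 4" using s r0 by simp
  have "t * R = r * (s * R) / 4" unfolding t by (simp add: algebra_simps)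
  then have tR: "t * R = r * \<bar>R\<bar> / 4" using sR by simp
  have "(e/16) * (- (Ra/2)) \<le> (e/16) * rho" by (rule mult_left_mono) (use rho e in auto)
  moreover have "(e/16) * (- (Ra/2)) = - (e * Ra / 32)" by (simp add: field_simps)
  ultimately have rho1: "t^2 * rho \<ge> - (e * Ra / 32)" unfolding t2 by simp
  have eRa: "e * Ra > 0" using e Ra by simp
  have X1: "X \<ge> r * \<bar>R\<bar> / 4" using X tR rho1 eRa by linarith
  have "r * d \<le> r * \<bar>R\<bar>" using d r0 by (intro mult_left_mono) auto
  then show Xd: "X \<ge> d * r / 4" using X1 by (simp add: mult.commute)
  have "\<bar>2 * t * c\<bar> = 2 * \<bar>t\<bar> * \<bar>c\<bar>" by (simp add: abs_mult)
  also have "\<dots> \<le> 2 * \<bar>t\<bar> * 1" using N(2) by (intro mult_left_mono) auto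
  finally have tc: "\<bar>2 * t * c\<bar> \<le> 1/2" using ta r1 by simp
  have tm0: "0 \<le> t^2 * m" using N(3) by simp
  have "t^2 * m \<le> t^2 * 1" using N(4) by (intro mult_left_mono) auto
  then have "t^2 * m \<le> t^2" by simp
  then have tm1: "t^2 * m \<le> 1/16" using t2 e by linarith
  show N1: "N \<ge> 1/2" using N(1) tc tm0 tm1 by linarith
  show N2: "N \<le> 2" using N(1) tc tm0 tm1 by linarith
  have eIa: "e * Ia \<le> e * 1" using e Ia by (intro mult_left_mono) auto
  have tsig: "t^2 * sig \<le> t^2 * 1" using sig by (intro mult_left_mono) auto
  have Y13: "Y1 \<le> 3 * e" using Y1 Y2 eIa tsig t2 e by (simp only: mult_1_right)
  have Xpos: "X > 0" using Xd d r0 by (smt (verit) mult_pos_pos divide_pos_pos)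
  have X2: "X^2 \<ge> (d * r / 4)^2" using Xd d r0 by (simp add: power_mono)
  have NY: "N * Y1 \<le> 2 * (3 * e)" using N1 N2 Y13 Y1(2) by (intro mult_mono) auto
  have "N * Y1 / X^2 \<le> (6 * e) / (d * r / 4)^2"
    using NY X2 N1 Y1(2) d r0 e
    by (intro frac_le) (auto intro: mult_nonneg_nonneg)
  also have "\<dots> = 96 / d^2" using rr d r0 e by (simp add: power_mult_distrib power_divide field_simps)
  finally show "N * Y1 / X^2 \<le> 96 / d^2" .
  have a1: "\<bar>e * Ra\<bar> \<le> e" using e Ra by (simp add: abs_mult) 
  have "\<bar>t * R\<bar> = \<bar>t\<bar> * \<bar>R\<bar>" by (simp add: abs_mult)
  also have "\<dots> \<le> \<bar>t\<bar> * 2" by (intro mult_left_mono) (use R2 in auto)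
  finally have a2: "\<bar>t * R\<bar> \<le> r/2" using ta by simp
  have "\<bar>t^2 * rho\<bar> = t^2 * \<bar>rho\<bar>" by (simp add: abs_mult)
  also have "\<dots> \<le> t^2 * (1/2)" by (intro mult_left_mono) (use rho Ra in auto)
  finally have a3: "\<bar>t^2 * rho\<bar> \<le> e/32" using t2 by linarith
  have "\<bar>X\<bar> \<le> \<bar>e * Ra\<bar> + \<bar>t * R\<bar> + \<bar>t^2 * rho\<bar>" unfolding X
    by (rule order_trans[OF abs_triangle_ineq add_right_mono[OF abs_triangle_ineq]])
  then have "\<bar>X\<bar> \<le> e + r/2 + e/32" using a1 a2 a3 by linarith
  then have "\<bar>X\<bar> + \<bar>Y1\<bar> \<le> 46/10 * r" using Y13 Y1(2) er by simp
  then have "(\<bar>X\<bar> + \<bar>Y1\<bar>) / N \<le> (46/10 * r) / (1/2)" using N1 r0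
    by (intro frac_le) auto
  also have "\<dots> < 10 * r" using r0 by simp
  finally show "(\<bar>X\<bar> + \<bar>Y1\<bar>) / N < 10 * r" .
qed

locale chs =
  fixes sc :: "complex \<Rightarrow> 'a::ab_group_add \<Rightarrow> 'a" and ip :: "'a \<Rightarrow> 'a \<Rightarrow> complex"
  assumes H: "complex_hilbert sc ip"
begin

lemmas HH = H[unfolded complex_hilbert_def]

lemma sc_add_right: "sc c (x + y) = sc c x + sc c y" using HH[THEN conjunct1] by blast
lemma sc_add_left: "sc (c + d) x = sc c x + sc d x" using HH[THEN conjunct2, THEN conjunct1] by blast
lemma sc_mult: "sc c (sc d x) = sc (c * d) x" using HH[THEN conjunct2, THEN conjunct2, THEN conjunct1] by blast
lemma sc_one: "sc 1 x = x" using HH[THEN conjunct2, THEN conjunct2, THEN conjunct2, THEN conjunct1] by blast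
lemma ip_add_left: "ip (x + y) z = ip x z + ip y z" using HH[THEN conjunct2, THEN conjunct2, THEN conjunct2, THEN conjunct2, THEN conjunct1] by blast
lemma ip_sc_left: "ip (sc c x) y = c * ip x y" using HH[THEN conjunct2, THEN conjunct2, THEN conjunct2, THEN conjunct2, THEN conjunct2, THEN conjunct1] by blast
lemma ip_cnj: "ip y x = cnj (ip x y)" using HH[THEN conjunct2, THEN conjunct2, THEN conjunct2, THEN conjunct2, THEN conjunct2, THEN conjunct2, THEN conjunct1] by blast
lemma ip_pos: "0 \<le> Re (ip x x)" using HH[THEN conjunct2, THEN conjunct2, THEN conjunct2, THEN conjunct2, THEN conjunct2, THEN conjunct2, THEN conjunct2, THEN conjunct1] by blast
lemma ip_zero: "ip x x = 0 \<Longrightarrow> x = 0" using HH[THEN conjunct2, THEN conjunct2, THEN conjunct2, THEN conjunct2, THEN conjunct2, THEN conjunct2, THEN conjunct2, THEN conjunct2] by blast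

lemma ip_zero_left: "ip 0 y = 0"
proof -
  have "ip (0 + 0) y = ip 0 y + ip 0 y" by (rule ip_add_left)
  then show ?thesis by simp
qed

lemma ip_add_right: "ip z (x + y) = ip z x + ip z y"
  using ip_cnj[of z "x+y"] ip_cnj[of z x] ip_cnj[of z y] ip_add_left[of x y z] by simp

lemma ip_sc_right: "ip x (sc c y) = cnj c * ip x y"
  using ip_cnj[of x "sc c y"] ip_cnj[of x y] ip_sc_left[of c y x] by simp

lemma ip_minus_left: "ip (- x) y = - ip x y"
proof -
  have "ip (x + - x) y = ip x y + ip (-x) y" by (rule ip_add_left)
  then have "ip x y + ip (-x) y = 0" by (simp add: ip_zero_left)
  from minus_unique[OF this] show ?thesis by simp
qed

lemma ip_diff_left: "ip (x - y) z = ip x z - ip y z"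
  by (simp only: diff_conv_add_uminus ip_add_left ip_minus_left)

lemma ip_diff_right: "ip z (x - y) = ip z x - ip z y"
  using ip_cnj[of z "x-y"] ip_cnj[of z x] ip_cnj[of z y] ip_diff_left[of x y z] by simp

lemma Im_ip_self: "Im (ip x x) = 0"
proof -
  have "Im (ip x x) = Im (cnj (ip x x))" by (subst ip_cnj) (rule refl)
  then have "Im (ip x x) = - Im (ip x x)" by simp
  then show ?thesis by simp
qed

lemma Re_ip_swap: "Re (ip y x) = Re (ip x y)" using ip_cnj[of y x] by simp
lemma Im_ip_swap: "Im (ip y x) = - Im (ip x y)" using ip_cnj[of y x] by simp

lemma hnorm_sq: "(hnorm ip x)^2 = Re (ip x x)"
  unfolding hnorm_def using ip_pos by simp

lemma re_bound: "2 * \<bar>Re (ip x y)\<bar> \<le> Re (ip x x) + Re (ip y y)"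
proof -
  have "0 \<le> Re (ip (x - y) (x - y))" by (rule ip_pos)
  also have "Re (ip (x - y) (x - y)) = Re (ip x x) - 2 * Re (ip x y) + Re (ip y y)"
    using Re_ip_swap[of x y] by (simp add: ip_diff_left ip_diff_right)
  finally have 1: "2 * Re (ip x y) \<le> Re (ip x x) + Re (ip y y)" by simp
  have "0 \<le> Re (ip (x + y) (x + y))" by (rule ip_pos)
  also have "Re (ip (x + y) (x + y)) = Re (ip x x) + 2 * Re (ip x y) + Re (ip y y)"
    using Re_ip_swap[of x y] by (simp add: ip_add_left ip_add_right)
  finally have 2: "- 2 * Re (ip x y) \<le> Re (ip x x) + Re (ip y y)" by simp
  show ?thesis using 1 2 by linarith
qed

lemma im_bound: "2 * \<bar>Im (ip x y)\<bar> \<le> Re (ip x x) + Re (ip y y)"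
proof -
  have "2 * \<bar>Re (ip x (sc \<i> y))\<bar> \<le> Re (ip x x) + Re (ip (sc \<i> y) (sc \<i> y))" by (rule re_bound)
  moreover have "Re (ip x (sc \<i> y)) = Im (ip x y)" by (simp add: ip_sc_right)
  moreover have "ip (sc \<i> y) (sc \<i> y) = ip y y" by (simp add: ip_sc_right ip_sc_left)
  ultimately show ?thesis by simp
qed

lemma expand: "ip (a + sc (of_real t) b) (x + sc (of_real t) y)
   = ip a x + of_real t * (ip a y + ip b x) + of_real (t^2) * ip b y"
  by (simp add: ip_add_left ip_add_right ip_sc_left ip_sc_right algebra_simps power2_eq_square)


lemma lin_parts:
  assumes "lin_operator sc D A"
  shows "0 \<in> D" "\<And>x y. x \<in> D \<Longrightarrow> y \<in> D \<Longrightarrow> x + y \<in> D"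
    "\<And>c x. x \<in> D \<Longrightarrow> sc c x \<in> D"
    "\<And>x y. x \<in> D \<Longrightarrow> y \<in> D \<Longrightarrow> A (x + y) = A x + A y"
    "\<And>c x. x \<in> D \<Longrightarrow> A (sc c x) = sc c (A x)"
  using assms unfolding lin_operator_def by blast+

lemma lin_A0:
  assumes "lin_operator sc D A" shows "A 0 = 0"
proof -
  have "A (0 + 0) = A 0 + A 0" using lin_parts[OF assms] by blast
  then show ?thesis by simp
qed

lemma ip_self_real: "ip w w = complex_of_real (Re (ip w w))"
  using Im_ip_self[of w] by (simp add: complex_eq_iff)

lemma normalize:
  assumes lin: "lin_operator sc D A" and w: "w \<in> D" "w \<noteq> 0"
  shows "Re (ip w w) > 0" "sc (of_real (1/sqrt (Re (ip w w)))) w \<in> D"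
    "hnorm ip (sc (of_real (1/sqrt (Re (ip w w)))) w) = 1"
    "ip (A (sc (of_real (1/sqrt (Re (ip w w)))) w)) (sc (of_real (1/sqrt (Re (ip w w)))) w)
       = ip (A w) w / of_real (Re (ip w w))"
proof -
  define N where "N = Re (ip w w)"
  have "ip w w \<noteq> 0" using ip_zero w by blast
  then have "N \<noteq> 0" using ip_self_real[of w] unfolding N_def by auto
  then show Npos: "Re (ip w w) > 0" using ip_pos[of w] unfolding N_def by linarith
  define c where "c = (of_real (1/sqrt N) :: complex)"
  have cc: "c * cnj c = of_real (1/N)" unfolding c_def using Npos unfolding N_def
    by (simp add: complex_eq_iff power2_eq_square[symmetric] power_divide)
  show "sc (of_real (1/sqrt (Re (ip w w)))) w \<in> D" using lin_parts(3)[OF lin w(1)] by blast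
  have "ip (sc c w) (sc c w) = c * cnj c * ip w w" by (simp add: ip_sc_left ip_sc_right)
  also have "\<dots> = 1" using cc ip_self_real[of w] Npos \<open>ip w w \<noteq> 0\<close> unfolding N_def
    by (simp add: field_simps)
  finally have "ip (sc c w) (sc c w) = 1" .
  then show "hnorm ip (sc (of_real (1/sqrt (Re (ip w w)))) w) = 1"
    unfolding hnorm_def c_def N_def by simp
  have "A (sc c w) = sc c (A w)" using lin_parts(5)[OF lin w(1)] by blast
  then have "ip (A (sc c w)) (sc c w) = c * cnj c * ip (A w) w" by (simp add: ip_sc_left ip_sc_right)
  also have "\<dots> = ip (A w) w / of_real N" using cc by (simp add: divide_inverse of_real_inverse)
  finally show "ip (A (sc (of_real (1/sqrt (Re (ip w w)))) w)) (sc (of_real (1/sqrt (Re (ip w w)))) w)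
       = ip (A w) w / of_real (Re (ip w w))" unfolding c_def N_def .
qed

lemma Im_nonneg:
  assumes lin: "lin_operator sc D A" and num: "num_range ip D A \<subseteq> {z. Im z \<ge> 0}"
    and w: "w \<in> D"
  shows "Im (ip (A w) w) \<ge> 0"
proof (cases "w = 0")
  case True
  then show ?thesis using lin_A0[OF lin] by (simp add: ip_zero_left)
next
  case False
  let ?N = "Re (ip w w)"
  let ?h = "sc (of_real (1/sqrt ?N)) w"
  note n = normalize[OF lin w False]
  have "ip (A ?h) ?h \<in> num_range ip D A" unfolding num_range_def using n(2,3) by blast
  then have "Im (ip (A ?h) ?h) \<ge> 0" using num by blast
  then have "Im (ip (A w) w) / ?N \<ge> 0" using n(4) by (simp add: Im_divide_of_real)
  then show ?thesis using n(1) by (simp add: zero_le_divide_iff)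
qed

lemma orth_zero:
  assumes dense: "densely_defined ip D" and d: "\<forall>x\<in>D. ip x d = 0"
  shows "d = 0"
proof -
  have "Re (ip d d) \<le> 0"
  proof (rule ccontr)
    assume "\<not> Re (ip d d) \<le> 0"
    then have pos: "Re (ip d d) > 0" by simp
    obtain y where y: "y \<in> D" "hnorm ip (d - y) < sqrt (Re (ip d d))"
      using dense pos unfolding densely_defined_def by (meson real_sqrt_gt_zero)
    have "ip (d - y) d = ip d d - ip y d" by (rule ip_diff_left)
    then have e: "ip (d - y) d = ip d d" using d y(1) by simp
    have "2 * \<bar>Re (ip (d - y) d)\<bar> \<le> Re (ip (d - y) (d - y)) + Re (ip d d)" by (rule re_bound)
    then have "Re (ip d d) \<le> Re (ip (d - y) (d - y))" using e by simp
    moreover have "Re (ip (d - y) (d - y)) < Re (ip d d)"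
      using y(2) hnorm_sq[of "d - y"] ip_pos[of "d - y"] pos
      by (metis hnorm_def real_sqrt_less_iff)
    ultimately show False by simp
  qed
  then have "ip d d = 0" using ip_pos[of d] ip_self_real[of d] by simp
  then show ?thesis by (rule ip_zero)
qed

lemma adj_prop:
  assumes dense: "densely_defined ip D" and dom_adj: "D \<subseteq> adj_dom ip D A" and v: "v \<in> D"
    and x: "x \<in> D"
  shows "ip (A x) v = ip x (adj ip D A v)"
proof -
  obtain z where z: "\<forall>x\<in>D. ip (A x) v = ip x z" using dom_adj v unfolding adj_dom_def by blast
  have "adj ip D A v = z" unfolding adj_def
  proof (rule the_equality)
    show "\<forall>x\<in>D. ip (A x) v = ip x z" by (rule z)
  next
    fix z' assume z': "\<forall>x\<in>D. ip (A x) v = ip x z'"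
    have "\<forall>x\<in>D. ip x (z' - z) = 0" using z z' by (simp add: ip_diff_right)
    then have "z' - z = 0" by (rule orth_zero[OF dense])
    then show "z' = z" by simp
  qed
  then show ?thesis using z x by simp
qed

lemma key:
  assumes lin: "lin_operator sc D A" and dense: "densely_defined ip D"
    and dom_adj: "D \<subseteq> adj_dom ip D A" and num: "num_range ip D A \<subseteq> {z. Im z \<ge> 0}"
    and alpha: "0 < Re \<alpha>" "Re \<alpha> < 1" "0 < Im \<alpha>" "Im \<alpha> < 1"
    and e: "0 < e" "e < 1"
    and u: "u \<in> D" "hnorm ip u = 1" "ip (A u) u = complex_of_real e * \<alpha>"
    and v: "v \<in> D" "hnorm ip v \<le> 1" "hnorm ip (A v) \<le> 1" "hnorm ip (adj ip D A v) \<le> 1"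
      "\<bar>Re (ip (A v) v)\<bar> \<le> Re \<alpha> / 2"
    and d: "0 < d" "d \<le> \<bar>Re (ip (A v) u + ip (A u) v)\<bar>"
  shows "Kfun ip D A (10 * sqrt e) \<le> ereal (96 / d^2)"
proof -
  define z where "z = adj ip D A v"
  have Auv: "ip (A u) v = ip u z" unfolding z_def by (rule adj_prop[OF dense dom_adj v(1) u(1)])
  define P where "P = ip (A v) u + ip u z"
  define R where "R = Re P"
  define q where "q = ip (A v) v"
  have dR: "d \<le> \<bar>R\<bar>" using d(2) unfolding R_def P_def Auv .
  have hn1: "Re (ip x x) \<le> 1" if "hnorm ip x \<le> 1" for x
  proof -
    have "0 \<le> hnorm ip x" unfolding hnorm_def using ip_pos[of x] by simp
    then have "(hnorm ip x)^2 \<le> 1" using that by (simp add: power_le_one)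
    then show ?thesis using hnorm_sq[of x] ip_pos[of x] by simp
  qed
  have uu: "Re (ip u u) = 1" using hnorm_sq[of u] u(2) by simp
  have vv: "Re (ip v v) \<le> 1" "0 \<le> Re (ip v v)" by (rule hn1[OF v(2)], rule ip_pos)
  have AA: "Re (ip (A v) (A v)) \<le> 1" by (rule hn1[OF v(3)])
  have zz: "Re (ip z z) \<le> 1" unfolding z_def by (rule hn1[OF v(4)])
  have b1: "\<bar>Re (ip (A v) u)\<bar> \<le> 1" using re_bound[of "A v" u] AA uu by linarith
  have b2: "\<bar>Re (ip u z)\<bar> \<le> 1" using re_bound[of u z] zz uu by linarith
  have b3: "\<bar>Im (ip (A v) u)\<bar> \<le> 1" using im_bound[of "A v" u] AA uu by linarith
  have b4: "\<bar>Im (ip u z)\<bar> \<le> 1" using im_bound[of u z] zz uu by linarith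
  have b5: "\<bar>Im q\<bar> \<le> 1" using im_bound[of "A v" v] AA vv unfolding q_def by linarith
  have b6: "\<bar>Re (ip u v)\<bar> \<le> 1" using re_bound[of u v] vv uu by linarith
  have "\<bar>R\<bar> \<le> \<bar>Re (ip (A v) u)\<bar> + \<bar>Re (ip u z)\<bar>" unfolding R_def P_def plus_complex.sel
    by (rule abs_triangle_ineq)
  then have R2: "\<bar>R\<bar> \<le> 2" using b1 b2 by linarith
  define s where "s = (if R \<ge> 0 then 1 else -1::real)"
  have s: "\<bar>s\<bar> = 1" "s * R = \<bar>R\<bar>" unfolding s_def by (cases "R \<ge> 0"; simp)+
  define r where "r = sqrt e"
  define t where "t = s * r / 4"
  define w where "w = u + sc (of_real t) v"
  define wm where "wm = u + sc (of_real (-t)) v"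
  note LP = lin_parts[OF lin]
  have wD: "w \<in> D" "wm \<in> D" unfolding w_def wm_def
    by (rule LP(2)[OF u(1) LP(3)[OF v(1)]])+
  have Aw: "A w = A u + sc (of_real t) (A v)" unfolding w_def
    by (simp only: LP(4)[OF u(1) LP(3)[OF v(1)]] LP(5)[OF v(1)])
  have Awm: "A wm = A u + sc (of_real (-t)) (A v)" unfolding wm_def
    by (simp only: LP(4)[OF u(1) LP(3)[OF v(1)]] LP(5)[OF v(1)])
  have Pw: "ip (A w) w = of_real e * \<alpha> + of_real t * P + of_real (t^2) * q"
    unfolding Aw by (subst w_def, simp only: expand u(3) Auv P_def q_def add.commute[of "ip u z" "ip (A v) u"])
  have Pwm: "ip (A wm) wm = of_real e * \<alpha> + of_real (-t) * P + of_real ((-t)^2) * q"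
    unfolding Awm by (subst wm_def, simp only: expand u(3) Auv P_def q_def add.commute[of "ip u z" "ip (A v) u"])
  have Nw: "ip w w = ip u u + of_real t * (ip u v + ip v u) + of_real (t^2) * ip v v"
    unfolding w_def by (rule expand)
  define X where "X = Re (ip (A w) w)"
  define Y1 where "Y1 = Im (ip (A w) w)"
  define Y2 where "Y2 = Im (ip (A wm) wm)"
  define N where "N = Re (ip w w)"
  have X: "X = e * Re \<alpha> + t * R + t^2 * Re q" unfolding X_def Pw R_def by simp
  have "Y1 = Im (of_real e * \<alpha> + of_real t * P + of_real (t^2) * q)" unfolding Y1_def Pw ..
  then have Y1a: "Y1 = e * Im \<alpha> + t * Im P + t^2 * Im q" by simp
  have Y1b: "0 \<le> Y1" unfolding Y1_def by (rule Im_nonneg[OF lin num wD(1)])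
  note Y1 = Y1a Y1b
  have "Y2 = Im (of_real e * \<alpha> + of_real (-t) * P + of_real ((-t)^2) * q)" unfolding Y2_def Pwm ..
  then have Y2a: "Y2 = e * Im \<alpha> - t * Im P + t^2 * Im q" by simp
  have Y2b: "0 \<le> Y2" unfolding Y2_def by (rule Im_nonneg[OF lin num wD(2)])
  note Y2 = Y2a Y2b
  have "N = Re (ip u u + of_real t * (ip u v + ip v u) + of_real (t^2) * ip v v)" unfolding N_def Nw ..
  also have "\<dots> = Re (ip u u) + t * (Re (ip u v) + Re (ip v u)) + t^2 * Re (ip v v)" by simp
  finally have N: "N = 1 + 2 * t * Re (ip u v) + t^2 * Re (ip v v)"
    unfolding uu Re_ip_swap[of u v] by (simp add: algebra_simps)
  have sig: "Im q \<le> 1" using b5 by simp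
  have rho: "\<bar>Re q\<bar> \<le> Re \<alpha> / 2" using v(5) unfolding q_def .
  note ac = arith_core[OF e r_def t_def s d(1) dR R2 rho alpha sig Y1 Y2 X N b6 vv(2) vv(1)]
  have "0 < d * r / 4" using d(1) e unfolding r_def by simp
  then have Xpos: "X > 0" using ac(1) by linarith
  have Npos: "N > 0" using ac(2) by simp
  have "w \<noteq> 0"
  proof
    assume "w = 0"
    then have "X = 0" unfolding X_def using lin_A0[OF lin] by (simp add: ip_zero_left)
    then show False using Xpos by simp
  qed
  note n = normalize[OF lin wD(1) this]
  define wh where "wh = sc (of_real (1/sqrt (Re (ip w w)))) w"
  define Q where "Q = ip (A wh) wh"
  have Q: "Q = ip (A w) w / of_real N" unfolding Q_def wh_def N_def by (rule n(4))
  have ReQ: "Re Q = X / N" and ImQ: "Im Q = Y1 / N" unfolding Q X_def Y1_def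
    by (simp_all add: Re_divide_of_real Im_divide_of_real)
  have ReQpos: "Re Q > 0" using ReQ Xpos Npos by simp
  have cmQ: "cmod Q = cmod (ip (A w) w) / N" unfolding Q using Npos by (simp add: norm_divide)
  have "cmod (ip (A w) w) \<le> \<bar>X\<bar> + \<bar>Y1\<bar>" unfolding X_def Y1_def by (rule cmod_le)
  then have "cmod Q \<le> (\<bar>X\<bar> + \<bar>Y1\<bar>) / N" unfolding cmQ using Npos by (simp add: divide_right_mono)
  then have cmQ2: "cmod Q < 10 * sqrt e" using ac(5) unfolding r_def by linarith
  have cmQ0: "0 < cmod Q" using ReQpos by auto
  have ratio: "Im Q / (Re Q)^2 = N * Y1 / X^2" unfolding ReQ ImQ using Npos Xpos
    by (simp add: field_simps power2_eq_square)
  have mem: "ereal (Im Q / (Re Q)^2) \<in> {ereal (Im (ip (A v) v) / (Re (ip (A v) v))\<^sup>2) | v.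
      v \<in> D \<and> hnorm ip v = 1 \<and> 0 < cmod (ip (A v) v) \<and> cmod (ip (A v) v) < 10 * sqrt e
      \<and> Re (ip (A v) v) > 0}"
  proof -
    have h1: "wh \<in> D" unfolding wh_def by (rule n(2))
    have h2: "hnorm ip wh = 1" unfolding wh_def by (rule n(3))
    have c0: "0 < cmod (ip (A wh) wh)" using cmQ0 unfolding Q_def .
    have c1: "cmod (ip (A wh) wh) < 10 * sqrt e" using cmQ2 unfolding Q_def .
    have c2: "Re (ip (A wh) wh) > 0" using ReQpos unfolding Q_def .
    show ?thesis unfolding Q_def
      by (rule CollectI, rule exI[where x=wh], intro conjI refl h1 h2 c0 c1 c2)
  qed
  have "Kfun ip D A (10 * sqrt e) \<le> ereal (Im Q / (Re Q)^2)"
    unfolding Kfun_def by (rule Inf_lower[OF mem])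
  also have "\<dots> \<le> ereal (96 / d^2)" unfolding ratio ereal_less_eq(3) by (rule ac(4))
  finally show ?thesis .
qed
end

theorem mainTheorem10:
  fixes sc :: "complex \<Rightarrow> 'a::ab_group_add \<Rightarrow> 'a"
    and ip :: "'a \<Rightarrow> 'a \<Rightarrow> complex"
    and D :: "'a set" and A :: "'a \<Rightarrow> 'a"
    and \<alpha> :: complex and \<epsilon> :: "nat \<Rightarrow> real" and u v :: "nat \<Rightarrow> 'a"
  assumes hilbert: "complex_hilbert sc ip"
    and lin: "lin_operator sc D A"
    and dense: "densely_defined ip D"
    and closed: "closed_operator ip D A"
    and dom_adj: "D \<subseteq> adj_dom ip D A"
    and num: "num_range ip D A \<subseteq> {z. Im z \<ge> 0}"
    and K: "\<And>a :: nat \<Rightarrow> real. (\<forall>n. a n > 0) \<Longrightarrow> a \<longlonglongrightarrow> 0 \<Longrightarrow>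
              (\<lambda>n. Kfun ip D A (a n)) \<longlonglongrightarrow> (\<infinity>::ereal)"
    and alpha: "0 < Re \<alpha>" "Re \<alpha> < 1" "0 < Im \<alpha>" "Im \<alpha> < 1" "cmod \<alpha> < 1"
    and eps: "\<forall>n. 0 < \<epsilon> n \<and> \<epsilon> n < 1" "\<epsilon> \<longlonglongrightarrow> 0"
    and u: "\<forall>n. u n \<in> D \<and> hnorm ip (u n) = 1 \<and> ip (A (u n)) (u n) = complex_of_real (\<epsilon> n) * \<alpha>"
    and v: "\<forall>n. v n \<in> D"
    and vbound: "\<forall>n. hnorm ip (v n) \<le> 1 \<and> hnorm ip (A (v n)) \<le> 1
                   \<and> hnorm ip (adj ip D A (v n)) \<le> 1"
    and vre: "\<forall>n. \<bar>Re (ip (A (v n)) (v n))\<bar> \<le> Re \<alpha> / 2"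
  shows "(\<lambda>n. Re (ip (A (v n)) (u n) + ip (A (u n)) (v n))) \<longlonglongrightarrow> 0"
proof -
  interpret chs sc ip by (rule chs.intro[OF hilbert])
  define f where "f n = Re (ip (A (v n)) (u n) + ip (A (u n)) (v n))" for n
  show ?thesis
  proof (rule ccontr)
    assume nc: "\<not> (\<lambda>n. Re (ip (A (v n)) (u n) + ip (A (u n)) (v n))) \<longlonglongrightarrow> 0"
    then have "\<not> f \<longlonglongrightarrow> 0" unfolding f_def .
    then obtain d where d: "d > 0" and freq: "\<And>M. \<exists>n\<ge>M. d \<le> \<bar>f n\<bar>"
      unfolding LIMSEQ_iff by (auto simp: not_less)
    define a where "a n = 10 * sqrt (\<epsilon> n)" for n
    have apos: "\<forall>n. a n > 0" unfolding a_def using eps(1) by simp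
    have "(\<lambda>n. sqrt (\<epsilon> n)) \<longlonglongrightarrow> sqrt 0" by (rule tendsto_real_sqrt[OF eps(2)])
    then have "(\<lambda>n. 10 * sqrt (\<epsilon> n)) \<longlonglongrightarrow> 10 * 0" by (intro tendsto_mult tendsto_const) simp
    then have alim: "a \<longlonglongrightarrow> 0" unfolding a_def by simp
    have Klim: "(\<lambda>n. Kfun ip D A (a n)) \<longlonglongrightarrow> (\<infinity>::ereal)" by (rule K[OF apos alim])
    have "eventually (\<lambda>n. ereal (96 / d^2) < Kfun ip D A (a n)) sequentially"
      by (rule order_tendstoD(1)[OF Klim]) simp
    then obtain M where M: "\<And>n. n \<ge> M \<Longrightarrow> ereal (96 / d^2) < Kfun ip D A (a n)"
      unfolding eventually_sequentially by blast
    obtain n where n: "n \<ge> M" "d \<le> \<bar>f n\<bar>" using freq by blast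
    have "Kfun ip D A (10 * sqrt (\<epsilon> n)) \<le> ereal (96 / d^2)"
    proof (rule key[OF lin dense dom_adj num alpha(1-4)])
      show "0 < \<epsilon> n" "\<epsilon> n < 1" using eps(1) by auto
      show "u n \<in> D" "hnorm ip (u n) = 1" "ip (A (u n)) (u n) = complex_of_real (\<epsilon> n) * \<alpha>"
        using u by auto
      show "v n \<in> D" using v by auto
      show "hnorm ip (v n) \<le> 1" "hnorm ip (A (v n)) \<le> 1" "hnorm ip (adj ip D A (v n)) \<le> 1"
        using vbound by auto
      show "\<bar>Re (ip (A (v n)) (v n))\<bar> \<le> Re \<alpha> / 2" using vre by auto
      show "0 < d" by (rule d)
      show "d \<le> \<bar>Re (ip (A (v n)) (u n) + ip (A (u n)) (v n))\<bar>" using n(2) unfolding f_def .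
    qed
    then show False using M[OF n(1)] unfolding a_def by simp
  qed
qed

end
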